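(* Fix a monomial order on $S$. Let $J,E,E'$ be ideals of $S$ such that $(J,E)$ and $(J,E')$ are G-nice pairs. The following are equivalent: (a) $(J+E)\cap(J+E')=J+(E\cap E')$ and $(J,E\cap E')$ is a G-nice pair; (b) $\mathrm{in}((J+E)\cap(J+E'))=\mathrm{in}(J)+\mathrm{in}(E\cap E')$.
   Context: $K$ is a field and $S=K[x_1,\ldots,x_n]$ with a fixed monomial order. For $0\neq f\in S$, $\mathrm{in}(f)$ denotes its leading monomial; for an ideal $I$, $\mathrm{in}(I)$ is the ideal generated by the leading monomials of the nonzero elements of $I$. A pair $(J,E)$ of ideals of $S$ is called Gröbner nice (G-nice) if $\mathrm{in}(J+E)=\mathrm{in}(J)+\mathrm{in}(E)$ (equivalently, the union of a Gröbner basis of $J$ and a Gröbner basis of $E$ is a Gröbner basis of $J+E$; equivalently, $\mathrm{in}(J\cap E)=\mathrm{in}(J)\cap\mathrm{in}(E)$). *)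

theory Defs
  imports "HOL-Library.Poly_Mapping"
begin

text \<open>Polynomial ring S = K[x_v : v in 'v] over a field K, with finitely many variables
  (the finite type 'v).\<close>

type_synonym ('v, 'k) mpoly = "('v \<Rightarrow>\<^sub>0 nat) \<Rightarrow>\<^sub>0 'k"

definition monomial_order :: "(('v \<Rightarrow>\<^sub>0 nat) \<Rightarrow> ('v \<Rightarrow>\<^sub>0 nat) \<Rightarrow> bool) \<Rightarrow> bool" where
  "monomial_order le \<longleftrightarrow>
     (\<forall>a. le a a) \<and>
     (\<forall>a b. le a b \<and> le b a \<longrightarrow> a = b) \<and>
     (\<forall>a b c. le a b \<and> le b c \<longrightarrow> le a c) \<and>
     (\<forall>a b. le a b \<or> le b a) \<and>
     (\<forall>a. le 0 a) \<and>
     (\<forall>a b c. le a b \<longrightarrow> le (a + c) (b + c))"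

definition monom :: "('v \<Rightarrow>\<^sub>0 nat) \<Rightarrow> ('v, 'k::field) mpoly" where
  "monom m = Poly_Mapping.single m 1"

definition lead_monom :: "(('v \<Rightarrow>\<^sub>0 nat) \<Rightarrow> ('v \<Rightarrow>\<^sub>0 nat) \<Rightarrow> bool) \<Rightarrow> ('v, 'k::field) mpoly \<Rightarrow> ('v \<Rightarrow>\<^sub>0 nat)" where
  "lead_monom le f = (THE m. m \<in> Poly_Mapping.keys f \<and> (\<forall>m' \<in> Poly_Mapping.keys f. le m' m))"

definition is_ideal :: "('v, 'k::field) mpoly set \<Rightarrow> bool" where
  "is_ideal I \<longleftrightarrow> 0 \<in> I \<and> (\<forall>a\<in>I. \<forall>b\<in>I. a + b \<in> I) \<and> (\<forall>r. \<forall>a\<in>I. r * a \<in> I)"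

definition ideal_gen :: "('v, 'k::field) mpoly set \<Rightarrow> ('v, 'k) mpoly set" where
  "ideal_gen X = \<Inter> {I. is_ideal I \<and> X \<subseteq> I}"

definition ideal_sum :: "('v, 'k::field) mpoly set \<Rightarrow> ('v, 'k) mpoly set \<Rightarrow> ('v, 'k) mpoly set" where
  "ideal_sum I J = {a + b | a b. a \<in> I \<and> b \<in> J}"

definition init_ideal :: "(('v \<Rightarrow>\<^sub>0 nat) \<Rightarrow> ('v \<Rightarrow>\<^sub>0 nat) \<Rightarrow> bool) \<Rightarrow> ('v, 'k::field) mpoly set \<Rightarrow> ('v, 'k) mpoly set" where
  "init_ideal le I = ideal_gen {monom (lead_monom le f) | f. f \<in> I \<and> f \<noteq> 0}"

definition G_nice :: "(('v \<Rightarrow>\<^sub>0 nat) \<Rightarrow> ('v \<Rightarrow>\<^sub>0 nat) \<Rightarrow> bool) \<Rightarrow> ('v, 'k::field) mpoly set \<Rightarrow> ('v, 'k) mpoly set \<Rightarrow> bool" where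
  "G_nice le J E \<longleftrightarrow> init_ideal le (ideal_sum J E) = ideal_sum (init_ideal le J) (init_ideal le E)"

end

theory Submission
  imports Defs "HOL-Library.Ramsey"
begin


lemma mo_props:
  assumes "monomial_order le"
  shows "le a a" "le a b \<Longrightarrow> le b a \<Longrightarrow> a = b" "le a b \<Longrightarrow> le b c \<Longrightarrow> le a c"
    "le a b \<or> le b a" "le 0 a" "le a b \<Longrightarrow> le (a + c) (b + c)"
  using assms unfolding monomial_order_def by blast+

lemma mo_wf:
  fixes le :: "('v::finite \<Rightarrow>\<^sub>0 nat) \<Rightarrow> ('v \<Rightarrow>\<^sub>0 nat) \<Rightarrow> bool"
  assumes mo: "monomial_order le"
  shows "wf {(a,b). le a b \<and> a \<noteq> b}"
proof (rule ccontr)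
  assume "\<not> ?thesis"
  then obtain s where s: "\<And>i. le (s (Suc i)) (s i) \<and> s (Suc i) \<noteq> s i"
    unfolding wf_iff_no_infinite_down_chain by auto
  have dec: "le (s j) (s i) \<and> s j \<noteq> s i" if "i < j" for i j
    using that
  proof (induction j)
    case 0 then show ?case by simp
  next
    case (Suc j)
    show ?case
    proof (cases "i = j")
      case True then show ?thesis using s by auto
    next
      case False
      then have ih: "le (s j) (s i) \<and> s j \<noteq> s i" using Suc by auto
      have l: "le (s (Suc j)) (s i)" using mo_props(3)[OF mo] s ih by blast
      moreover have "s (Suc j) \<noteq> s i"
      proof
        assume eq: "s (Suc j) = s i"
        then have "le (s j) (s (Suc j))" using ih by simp
        then show False using s mo_props(2)[OF mo] by blast
      qed
      ultimately show ?thesis by blast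
    qed
  qed
  define P where "P X = {v::'v. Poly_Mapping.lookup (s (Min X)) v \<le> Poly_Mapping.lookup (s (Max X)) v}" for X :: "nat set"
  obtain h where h: "bij_betw h {0..<card (UNIV :: 'v set set)} (UNIV :: 'v set set)"
    using ex_bij_betw_nat_finite[of "UNIV :: 'v set set"] by auto
  define col where "col X = inv_into {0..<card (UNIV :: 'v set set)} h (P X)" for X
  have colb: "col X < card (UNIV :: 'v set set)" for X
    unfolding col_def using h by (metis atLeastLessThan_iff bij_betw_def inv_into_into UNIV_I)
  have hcol: "h (col X) = P X" for X
    unfolding col_def using h by (metis bij_betw_def f_inv_into_f UNIV_I)
  obtain Y t where Y: "Y \<subseteq> (UNIV::nat set)" "infinite Y" "t < card (UNIV :: 'v set set)"
    and Yc: "\<forall>x\<in>Y. \<forall>y\<in>Y. x \<noteq> y \<longrightarrow> col {x, y} = t"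
    using Ramsey2[where Z="UNIV::nat set" and s="card (UNIV :: 'v set set)" and f=col] colb by blast
  have PT: "P {x,y} = h t" if "x \<in> Y" "y \<in> Y" "x \<noteq> y" for x y
    using Yc that hcol by metis
  have Pxy: "P {x,y} = {v. Poly_Mapping.lookup (s x) v \<le> Poly_Mapping.lookup (s y) v}" if "x < y" for x y
    using that unfolding P_def by (simp add: min_def max_def)
  obtain y0 where y0: "y0 \<in> Y" using Y(2) by (metis finite.emptyI ex_in_conv)
  show False
  proof (cases "h t = UNIV")
    case True
    obtain y1 where y1: "y1 \<in> Y" "y0 < y1"
      using Y(2) by (metis infinite_nat_iff_unbounded)
    have "P {y0, y1} = UNIV" using PT[OF y0 y1(1)] y1 True by auto
    then have pw: "Poly_Mapping.lookup (s y0) v \<le> Poly_Mapping.lookup (s y1) v" for v using Pxy[OF y1(2)] by auto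
    have pw2: "Poly_Mapping.lookup (s y1) k = Poly_Mapping.lookup (s y0) k + (Poly_Mapping.lookup (s y1) k - Poly_Mapping.lookup (s y0) k)" for k
      using pw[of k] by simp
    have "s y1 = s y0 + (s y1 - s y0)"
      by (rule poly_mapping_eqI) (simp only: lookup_add lookup_minus pw2[symmetric])
    moreover have "le (0 + s y0) ((s y1 - s y0) + s y0)" using mo_props(5,6)[OF mo] by blast
    ultimately have "le (s y0) (s y1)" by (simp add: add.commute)
    then show False using dec[OF y1(2)] mo_props(2)[OF mo] by blast
  next
    case False
    then obtain v where v: "v \<notin> h t" by auto
    have lt: "Poly_Mapping.lookup (s y) v < Poly_Mapping.lookup (s x) v" if "x \<in> Y" "y \<in> Y" "x < y" for x y
      using PT[OF that(1,2)] Pxy[OF that(3)] v that by auto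
    define x0 where "x0 = (LEAST x. x \<in> Y)"
    have x0: "x0 \<in> Y" "\<And>x. x \<in> Y \<Longrightarrow> x0 \<le> x" unfolding x0_def using y0
      by (auto intro: LeastI Least_le)
    have inj: "inj_on (\<lambda>x. Poly_Mapping.lookup (s x) v) Y"
      by (rule inj_onI) (metis lt less_irrefl linorder_neq_iff)
    have "(\<lambda>x. Poly_Mapping.lookup (s x) v) ` Y \<subseteq> {..Poly_Mapping.lookup (s x0) v}"
      using x0 lt by (force simp: order_le_less)
    then have "finite ((\<lambda>x. Poly_Mapping.lookup (s x) v) ` Y)" using finite_subset by blast
    then show False using inj Y(2) finite_imageD by blast
  qed
qed


lemma ex_max:
  assumes mo: "monomial_order le" and "finite K" "K \<noteq> {}"
  shows "\<exists>m\<in>K. \<forall>m'\<in>K. le m' m"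
  using assms(2,3)
proof (induction K rule: finite_ne_induct)
  case (singleton x) then show ?case using mo_props(1)[OF mo] by auto
next
  case (insert x F)
  then obtain m where m: "m \<in> F" "\<forall>m'\<in>F. le m' m" by auto
  show ?case
  proof (cases "le x m")
    case True then show ?thesis using m by auto
  next
    case False
    then have "le m x" using mo_props(4)[OF mo] by blast
    then show ?thesis using m mo_props(1,3)[OF mo] by blast
  qed
qed

lemma lm_props:
  assumes mo: "monomial_order le" and f: "f \<noteq> 0"
  shows "lead_monom le f \<in> Poly_Mapping.keys f" "\<And>m'. m' \<in> Poly_Mapping.keys f \<Longrightarrow> le m' (lead_monom le f)"
proof -
  have ne: "Poly_Mapping.keys f \<noteq> {}" using f by simp
  obtain m where m: "m \<in> Poly_Mapping.keys f" "\<forall>m'\<in>Poly_Mapping.keys f. le m' m"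
    using ex_max[OF mo finite_keys ne] by blast
  have "lead_monom le f = m" unfolding lead_monom_def
    by (rule the_equality) (use m mo_props(2)[OF mo] in blast)+
  then show "lead_monom le f \<in> Poly_Mapping.keys f" "\<And>m'. m' \<in> Poly_Mapping.keys f \<Longrightarrow> le m' (lead_monom le f)"
    using m by auto
qed

lemma ideal_gen_ideal: "is_ideal (ideal_gen X)"
  unfolding ideal_gen_def is_ideal_def by auto

lemma ideal_gen_sub: "X \<subseteq> ideal_gen X"
  unfolding ideal_gen_def by auto

lemma ideal_gen_least: "is_ideal I \<Longrightarrow> X \<subseteq> I \<Longrightarrow> ideal_gen X \<subseteq> I"
  unfolding ideal_gen_def by auto

lemma ideal_gen_mono: "X \<subseteq> Y \<Longrightarrow> ideal_gen X \<subseteq> ideal_gen Y"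
  unfolding ideal_gen_def by auto

lemma init_mono: "A \<subseteq> B \<Longrightarrow> init_ideal le A \<subseteq> init_ideal le B"
  unfolding init_ideal_def by (rule ideal_gen_mono) blast

lemma init_ideal_ideal: "is_ideal (init_ideal le A)"
  unfolding init_ideal_def by (rule ideal_gen_ideal)

lemma ideal_neg: "is_ideal I \<Longrightarrow> a \<in> I \<Longrightarrow> - a \<in> I"
  unfolding is_ideal_def by (metis mult_minus1)

lemma ideal_diff: "is_ideal I \<Longrightarrow> a \<in> I \<Longrightarrow> b \<in> I \<Longrightarrow> a - b \<in> I"
  using ideal_neg unfolding is_ideal_def by (metis diff_conv_add_uminus)

lemma ideal_sum_ideal:
  assumes "is_ideal I" "is_ideal J" shows "is_ideal (ideal_sum I J)"
  unfolding is_ideal_def ideal_sum_def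
proof (intro conjI ballI allI)
  show "0 \<in> {a + b |a b. a \<in> I \<and> b \<in> J}" using assms unfolding is_ideal_def by force
next
  fix x y assume "x \<in> {a + b |a b. a \<in> I \<and> b \<in> J}" "y \<in> {a + b |a b. a \<in> I \<and> b \<in> J}"
  then obtain a b c d where "x = a + b" "y = c + d" "a \<in> I" "b \<in> J" "c \<in> I" "d \<in> J" by blast
  then have "x + y = (a + c) + (b + d)" "a + c \<in> I" "b + d \<in> J" using assms unfolding is_ideal_def
    by (auto simp: algebra_simps)
  then show "x + y \<in> {a + b |a b. a \<in> I \<and> b \<in> J}" by blast
next
  fix r x assume "x \<in> {a + b |a b. a \<in> I \<and> b \<in> J}"
  then obtain a b where "x = a + b" "a \<in> I" "b \<in> J" by blast
  then have "r * x = r * a + r * b" "r * a \<in> I" "r * b \<in> J" using assms unfolding is_ideal_def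
    by (auto simp: distrib_left)
  then show "r * x \<in> {a + b |a b. a \<in> I \<and> b \<in> J}" by blast
qed

lemma ideal_Int: "is_ideal I \<Longrightarrow> is_ideal J \<Longrightarrow> is_ideal (I \<inter> J)"
  unfolding is_ideal_def by auto

lemma ideal_sum_sub: "is_ideal I \<Longrightarrow> A \<subseteq> I \<Longrightarrow> B \<subseteq> I \<Longrightarrow> ideal_sum A B \<subseteq> I"
  unfolding is_ideal_def ideal_sum_def by auto

lemma sub_ideal_sum1: "0 \<in> B \<Longrightarrow> A \<subseteq> ideal_sum A B"
  unfolding ideal_sum_def by force

lemma sub_ideal_sum2: "0 \<in> A \<Longrightarrow> B \<subseteq> ideal_sum A B"
  unfolding ideal_sum_def by force

lemma lookup_single_mult:
  fixes g :: "('v, 'k::field) mpoly"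
  shows "Poly_Mapping.lookup (Poly_Mapping.single d c * g) (d + k) = c * Poly_Mapping.lookup g k"
proof -
  have "Poly_Mapping.lookup (Poly_Mapping.single d c * g) (d + k)
     = (\<Sum>l. Poly_Mapping.lookup (Poly_Mapping.single d c) l * (\<Sum>q. Poly_Mapping.lookup g q when d + k = l + q))"
    by (rule lookup_mult)
  also have "\<dots> = c * (\<Sum>q. Poly_Mapping.lookup g q when d + k = d + q)"
    by (simp add: lookup_single when_mult)
  also have "\<dots> = c * Poly_Mapping.lookup g k"
  proof -
    have "(\<Sum>q. Poly_Mapping.lookup g q when d + k = d + q) = (\<Sum>q. Poly_Mapping.lookup g q when k = q)"
      by (rule Sum_any.cong) (simp only: add_left_cancel)
    also have "\<dots> = Poly_Mapping.lookup g k" by (rule Sum_any_when_equal')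
    finally show ?thesis by (rule arg_cong)
  qed
  finally show ?thesis .
qed

lemma keys_single_mult:
  "Poly_Mapping.keys (Poly_Mapping.single d c * g) \<subseteq> {d + k | k. k \<in> Poly_Mapping.keys g}"
proof
  fix x assume "x \<in> Poly_Mapping.keys (Poly_Mapping.single d c * g)"
  then obtain a b where "x = a + b" "a \<in> Poly_Mapping.keys (Poly_Mapping.single d c)" "b \<in> Poly_Mapping.keys g"
    using keys_mult[of "Poly_Mapping.single d c" g] by blast
  moreover then have "a = d" by (simp split: if_splits)
  ultimately show "x \<in> {d + k | k. k \<in> Poly_Mapping.keys g}" by blast
qed



lemma monom_in_gen:
  fixes A :: "('v, 'k::field) mpoly set"
  assumes "(monom m :: ('v, 'k) mpoly) \<in> ideal_gen {monom (lead_monom le f) | f. f \<in> A \<and> f \<noteq> 0}"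
  shows "\<exists>f\<in>A. f \<noteq> 0 \<and> (\<exists>d. m = d + lead_monom le f)"
proof -
  define D :: "('v, 'k) mpoly set" where
    "D = {p. \<forall>k\<in>Poly_Mapping.keys p. \<exists>f\<in>A. f \<noteq> 0 \<and> (\<exists>d. k = d + lead_monom le f)}"
  have iD: "is_ideal D" unfolding is_ideal_def
  proof (intro conjI ballI allI)
    show "0 \<in> D" unfolding D_def by simp
  next
    fix a b assume "a \<in> D" "b \<in> D"
    then show "a + b \<in> D" unfolding D_def
    proof (intro CollectI ballI)
      fix k assume "a \<in> {p. \<forall>k\<in>Poly_Mapping.keys p. \<exists>f\<in>A. f \<noteq> 0 \<and> (\<exists>d. k = d + lead_monom le f)}"
        "b \<in> {p. \<forall>k\<in>Poly_Mapping.keys p. \<exists>f\<in>A. f \<noteq> 0 \<and> (\<exists>d. k = d + lead_monom le f)}"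
        "k \<in> Poly_Mapping.keys (a + b)"
      then show "\<exists>f\<in>A. f \<noteq> 0 \<and> (\<exists>d. k = d + lead_monom le f)"
        using keys_add[of a b] by auto
    qed
  next
    fix r a assume a: "a \<in> D"
    show "r * a \<in> D" unfolding D_def
    proof (rule CollectI, rule ballI)
      fix k assume "k \<in> Poly_Mapping.keys (r * a)"
      then obtain x y where xy: "k = x + y" "y \<in> Poly_Mapping.keys a"
        using keys_mult[of r a] by blast
      then obtain f d where "f \<in> A" "f \<noteq> 0" "y = d + lead_monom le f" using a unfolding D_def by blast
      moreover then have "k = (x + d) + lead_monom le f" using xy by (simp add: add.assoc)
      ultimately show "\<exists>f\<in>A. f \<noteq> 0 \<and> (\<exists>d. k = d + lead_monom le f)" by blast
    qed
  qed
  have gens: "{monom (lead_monom le f) | f. f \<in> A \<and> f \<noteq> 0} \<subseteq> D"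
  proof
    fix x :: "('v, 'k) mpoly" assume "x \<in> {monom (lead_monom le f) | f. f \<in> A \<and> f \<noteq> 0}"
    then obtain f where "x = monom (lead_monom le f)" "f \<in> A" "f \<noteq> 0" by blast
    then show "x \<in> D" unfolding D_def monom_def by (intro CollectI ballI) (auto intro!: exI[of _ 0])
  qed
  have "monom m \<in> D" by (rule subsetD[OF ideal_gen_least[OF iD gens] assms])
  moreover have "m \<in> Poly_Mapping.keys (monom m :: ('v, 'k) mpoly)" unfolding monom_def by simp
  ultimately show ?thesis unfolding D_def by blast
qed

lemma eq_by_init:
  fixes A B :: "('v::finite, 'k::field) mpoly set"
  assumes mo: "monomial_order le" and iA: "is_ideal A" and iB: "is_ideal B" and sub: "A \<subseteq> B"
    and ini: "init_ideal le B \<subseteq> init_ideal le A"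
  shows "B \<subseteq> A"
proof (rule ccontr)
  assume "\<not> B \<subseteq> A"
  define S where "S = {lead_monom le f | f. f \<in> B \<and> f \<notin> A}"
  obtain m0 where "m0 \<in> S" using \<open>\<not> B \<subseteq> A\<close> unfolding S_def by blast
  then obtain m where mS: "m \<in> S" and mmin: "\<And>y. (y, m) \<in> {(a,b). le a b \<and> a \<noteq> b} \<Longrightarrow> y \<notin> S"
    using wfE_min[OF mo_wf[OF mo]] by blast
  then obtain f where f: "m = lead_monom le f" "f \<in> B" "f \<notin> A" unfolding S_def by blast
  have A0: "0 \<in> A" using iA unfolding is_ideal_def by blast
  have fnz: "f \<noteq> 0" using f A0 by auto
  have "monom (lead_monom le f) \<in> init_ideal le B"
    unfolding init_ideal_def by (rule subsetD[OF ideal_gen_sub]) (use f fnz in blast)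
  then have "(monom (lead_monom le f) :: ('v, 'k) mpoly) \<in> ideal_gen {monom (lead_monom le g) | g. g \<in> A \<and> g \<noteq> 0}"
    using ini unfolding init_ideal_def by blast
  then obtain g d where g: "g \<in> A" "g \<noteq> 0" "lead_monom le f = d + lead_monom le g"
    using monom_in_gen by blast
  have lgk: "lead_monom le g \<in> Poly_Mapping.keys g" using lm_props(1)[OF mo g(2)] .
  then have lg0: "Poly_Mapping.lookup g (lead_monom le g) \<noteq> 0" by (simp add: in_keys_iff)
  define c where "c = Poly_Mapping.lookup f (lead_monom le f) / Poly_Mapping.lookup g (lead_monom le g)"
  define q where "q = Poly_Mapping.single d c * g"
  define h where "h = f - q"
  have qA: "q \<in> A" unfolding q_def using iA g(1) unfolding is_ideal_def by blast
  have hB: "h \<in> B" unfolding h_def using ideal_diff[OF iB f(2)] qA sub by blast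
  have hA: "h \<notin> A"
  proof
    assume "h \<in> A"
    then have "h + q \<in> A" using iA qA unfolding is_ideal_def by blast
    then show False using f(3) unfolding h_def by simp
  qed
  then have hnz: "h \<noteq> 0" using A0 by metis
  have keysh: "Poly_Mapping.keys h \<subseteq> Poly_Mapping.keys f \<union> Poly_Mapping.keys q"
    unfolding h_def using keys_add[of f "- q"] by (simp only: diff_conv_add_uminus keys_minus)
  have allle: "le k (lead_monom le f)" if "k \<in> Poly_Mapping.keys h" for k
  proof -
    have "k \<in> Poly_Mapping.keys f \<or> k \<in> Poly_Mapping.keys q" using keysh that by blast
    then show ?thesis
    proof
      assume "k \<in> Poly_Mapping.keys f" then show ?thesis using lm_props(2)[OF mo fnz] by blast
    next
      assume "k \<in> Poly_Mapping.keys q"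
      then obtain k' where k': "k = d + k'" "k' \<in> Poly_Mapping.keys g"
        using keys_single_mult[of d c g] unfolding q_def by blast
      have "le (k' + d) (lead_monom le g + d)"
        using mo_props(6)[OF mo] lm_props(2)[OF mo g(2) k'(2)] by blast
      then show ?thesis using k' g(3) by (simp add: add.commute)
    qed
  qed
  have "Poly_Mapping.lookup h (lead_monom le f) = 0"
  proof -
    have "Poly_Mapping.lookup q (lead_monom le f) = c * Poly_Mapping.lookup g (lead_monom le g)"
      unfolding q_def g(3) by (rule lookup_single_mult)
    also have "\<dots> = Poly_Mapping.lookup f (lead_monom le f)" unfolding c_def using lg0 by simp
    finally show ?thesis unfolding h_def by (simp add: lookup_minus)
  qed
  then have "lead_monom le h \<noteq> lead_monom le f" using lm_props(1)[OF mo hnz] by auto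
  moreover have "le (lead_monom le h) (lead_monom le f)" using allle lm_props(1)[OF mo hnz] by blast
  moreover have "lead_monom le h \<in> S" unfolding S_def using hB hA by blast
  ultimately show False using mmin f(1) by blast
qed


theorem mainTheorem4:
  fixes le :: "('v::finite \<Rightarrow>\<^sub>0 nat) \<Rightarrow> ('v \<Rightarrow>\<^sub>0 nat) \<Rightarrow> bool"
    and J E E' :: "('v, 'k::field) mpoly set"
  assumes "monomial_order le"
    and "is_ideal J" and "is_ideal E" and "is_ideal E'"
    and "G_nice le J E" and "G_nice le J E'"
  shows "(ideal_sum J E \<inter> ideal_sum J E' = ideal_sum J (E \<inter> E') \<and> G_nice le J (E \<inter> E'))
     \<longleftrightarrow> init_ideal le (ideal_sum J E \<inter> ideal_sum J E') = ideal_sum (init_ideal le J) (init_ideal le (E \<inter> E'))"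
proof -
  note mo = assms(1)
  define A where "A = ideal_sum J (E \<inter> E')"
  define B where "B = ideal_sum J E \<inter> ideal_sum J E'"
  have iEE: "is_ideal (E \<inter> E')" using ideal_Int assms(3,4) by blast
  have iA: "is_ideal A" unfolding A_def using ideal_sum_ideal assms(2) iEE by blast
  have iB: "is_ideal B" unfolding B_def using ideal_sum_ideal ideal_Int assms(2,3,4) by blast
  have AB: "A \<subseteq> B" unfolding A_def B_def ideal_sum_def by blast
  have J0: "0 \<in> J" using assms(2) unfolding is_ideal_def by blast
  have EE0: "0 \<in> E \<inter> E'" using iEE unfolding is_ideal_def by blast
  have initsub: "ideal_sum (init_ideal le J) (init_ideal le (E \<inter> E')) \<subseteq> init_ideal le A"
    unfolding A_def
    by (rule ideal_sum_sub[OF init_ideal_ideal init_mono[OF sub_ideal_sum1[OF EE0]] init_mono[OF sub_ideal_sum2[OF J0]]])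
  show ?thesis
  proof
    assume "ideal_sum J E \<inter> ideal_sum J E' = ideal_sum J (E \<inter> E') \<and> G_nice le J (E \<inter> E')"
    then show "init_ideal le (ideal_sum J E \<inter> ideal_sum J E') = ideal_sum (init_ideal le J) (init_ideal le (E \<inter> E'))"
      unfolding G_nice_def by simp
  next
    assume H: "init_ideal le (ideal_sum J E \<inter> ideal_sum J E') = ideal_sum (init_ideal le J) (init_ideal le (E \<inter> E'))"
    then have "init_ideal le B \<subseteq> init_ideal le A" using initsub unfolding B_def by simp
    then have "B \<subseteq> A" by (rule eq_by_init[OF mo iA iB AB])
    then have BA: "B = A" using AB by blast
    show "ideal_sum J E \<inter> ideal_sum J E' = ideal_sum J (E \<inter> E') \<and> G_nice le J (E \<inter> E')"
      using BA H unfolding A_def B_def G_nice_def by simp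
  qed
qed

end
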